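(* Let $G$ be a $2$-connected non-Hamiltonian graph of order $n\ge 4$. Then $px_3(G)\le\lfloor n/2\rfloor$.
   Context: All graphs are finite, simple and undirected. An edge-coloring assigns colors to edges, adjacent edges being allowed to share a color. A tree in an edge-colored graph is proper if no two adjacent edges of it receive the same color. An edge-coloring of $G$ is a $3$-proper coloring if for every $3$-element set $S\subseteq V(G)$ there is a proper tree in $G$ containing all vertices of $S$; $px_3(G)$ is the minimum number of colors in a $3$-proper coloring of $G$. *)

theory Defs
  imports Main
begin

definition simple_graph :: "'a set \<Rightarrow> 'a set set \<Rightarrow> bool" where
  "simple_graph V E \<longleftrightarrow> finite V \<and>
     (\<forall>e\<in>E. \<exists>u v. u \<noteq> v \<and> u \<in> V \<and> v \<in> V \<and> e = {u, v})"

definition reach :: "'a set set \<Rightarrow> 'a \<Rightarrow> 'a \<Rightarrow> bool" where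
  "reach F u v \<longleftrightarrow> (u, v) \<in> {(x, y). {x, y} \<in> F}\<^sup>*"

definition connected_graph :: "'a set \<Rightarrow> 'a set set \<Rightarrow> bool" where
  "connected_graph V E \<longleftrightarrow> V \<noteq> {} \<and> (\<forall>u\<in>V. \<forall>v\<in>V. reach E u v)"

definition del_vertex_edges :: "'a set set \<Rightarrow> 'a \<Rightarrow> 'a set set" where
  "del_vertex_edges E v = {e \<in> E. v \<notin> e}"

definition two_connected :: "'a set \<Rightarrow> 'a set set \<Rightarrow> bool" where
  "two_connected V E \<longleftrightarrow> card V \<ge> 3 \<and> connected_graph V E \<and>
     (\<forall>v\<in>V. connected_graph (V - {v}) (del_vertex_edges E v))"

definition hamiltonian :: "'a set \<Rightarrow> 'a set set \<Rightarrow> bool" where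
  "hamiltonian V E \<longleftrightarrow> (\<exists>vs. distinct vs \<and> set vs = V \<and> length vs \<ge> 3 \<and>
     (\<forall>i < length vs. {vs ! i, vs ! ((i + 1) mod length vs)} \<in> E))"

definition is_tree_in :: "'a set \<Rightarrow> 'a set set \<Rightarrow> 'a set \<Rightarrow> 'a set set \<Rightarrow> bool" where
  "is_tree_in V E VT ET \<longleftrightarrow> VT \<subseteq> V \<and> ET \<subseteq> E \<and> (\<forall>e\<in>ET. e \<subseteq> VT) \<and>
     finite VT \<and> connected_graph VT ET \<and> card ET + 1 = card VT"

definition proper_edges :: "('a set \<Rightarrow> 'c) \<Rightarrow> 'a set set \<Rightarrow> bool" where
  "proper_edges c ET \<longleftrightarrow>
     (\<forall>e\<in>ET. \<forall>f\<in>ET. e \<noteq> f \<and> e \<inter> f \<noteq> {} \<longrightarrow> c e \<noteq> c f)"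

definition three_proper_coloring :: "'a set \<Rightarrow> 'a set set \<Rightarrow> ('a set \<Rightarrow> 'c) \<Rightarrow> bool" where
  "three_proper_coloring V E c \<longleftrightarrow>
     (\<forall>S. S \<subseteq> V \<and> card S = 3 \<longrightarrow>
        (\<exists>VT ET. is_tree_in V E VT ET \<and> S \<subseteq> VT \<and> proper_edges c ET))"

definition px3 :: "'a set \<Rightarrow> 'a set set \<Rightarrow> nat" where
  "px3 V E = (LEAST k. \<exists>c :: 'a set \<Rightarrow> nat. c ` E \<subseteq> {..<k} \<and> three_proper_coloring V E c)"

end

theory Submission imports Defs begin

definition deg :: "'a set set \<Rightarrow> 'a \<Rightarrow> nat" where "deg T v = card {e\<in>T. v\<in>e}"
definition nbr :: "'a set set \<Rightarrow> 'a \<Rightarrow> 'a set" where "nbr E w = {v. {w,v} \<in> E}"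
definition good :: "'a set \<Rightarrow> 'a set set \<Rightarrow> nat \<Rightarrow> 'a set \<Rightarrow> 'a set set \<Rightarrow> ('a set \<Rightarrow> nat) \<Rightarrow> bool" where
  "good V E d X T c \<longleftrightarrow> is_tree_in V E X T \<and> proper_edges c T \<and> c ` T \<subseteq> {..<d} \<and> (\<forall>v. deg T v \<le> d)"

lemma sg_pair: "simple_graph V E \<Longrightarrow> {a,b}\<in>E \<Longrightarrow> a\<noteq>b \<and> a\<in>V \<and> b\<in>V"
  unfolding simple_graph_def by (metis doubleton_eq_iff insert_absorb2)

lemma sg_sub: "simple_graph V E \<Longrightarrow> e\<in>E \<Longrightarrow> e \<subseteq> V"
proof -
  assume "simple_graph V E" "e\<in>E"
  then obtain u v where "u\<in>V" "v\<in>V" "e = {u,v}" unfolding simple_graph_def by blast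
  then show "e \<subseteq> V" by simp
qed

lemma sg_card2: "simple_graph V E \<Longrightarrow> e\<in>E \<Longrightarrow> card e = 2"
  unfolding simple_graph_def by fastforce

lemma sg_finite_E: "simple_graph V E \<Longrightarrow> finite E"
proof -
  assume sg: "simple_graph V E"
  have "E \<subseteq> Pow V" using sg_sub[OF sg] by blast
  moreover have "finite V" using sg simple_graph_def by blast
  ultimately show ?thesis using finite_subset by blast
qed

lemma reach_refl: "reach F a a" by (simp add: reach_def)
lemma reach_edge: "{a,b}\<in>F \<Longrightarrow> reach F a b" by (auto simp: reach_def)
lemma reach_trans: "reach F a b \<Longrightarrow> reach F b c \<Longrightarrow> reach F a c"
  unfolding reach_def by (rule rtrancl_trans)
lemma reach_mono: "F \<subseteq> F' \<Longrightarrow> reach F a b \<Longrightarrow> reach F' a b"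
  unfolding reach_def using rtrancl_mono[of "{(x,y). {x,y}\<in>F}" "{(x,y). {x,y}\<in>F'}"] by auto
lemma reach_sym: "reach F a b \<Longrightarrow> reach F b a"
  unfolding reach_def
proof (induction rule: rtrancl_induct)
  case base then show ?case by simp
next
  case (step y z)
  then have "(z,y) \<in> {(x,y). {x,y}\<in>F}" by (simp add: insert_commute)
  then show ?case using step.IH by (rule converse_rtrancl_into_rtrancl)
qed

lemma crossing:
  assumes "reach F x y" "x \<in> X" "y \<notin> X"
  shows "\<exists>a b. {a,b}\<in>F \<and> a\<in>X \<and> b\<notin>X"
  using assms(1,3) unfolding reach_def
proof (induction rule: rtrancl_induct)
  case base then show ?case using assms(2) by simp
next
  case (step y z)
  show ?case proof (cases "y \<in> X")
    case True then show ?thesis using step by auto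
  next
    case False then show ?thesis using step.IH by simp
  qed
qed

lemma handshake:
  assumes "finite X" "finite T" "\<forall>e\<in>T. e \<subseteq> X \<and> card e = 2"
  shows "(\<Sum>v\<in>X. deg T v) = 2 * card T"
proof -
  have "(\<Sum>v\<in>X. deg T v) = (\<Sum>v\<in>X. \<Sum>e\<in>T. if v\<in>e then 1 else 0)"
    unfolding deg_def using assms(2) by (simp add: sum.inter_filter[symmetric])
  also have "\<dots> = (\<Sum>e\<in>T. \<Sum>v\<in>X. if v\<in>e then 1 else 0)" by (rule sum.swap)
  also have "\<dots> = (\<Sum>e\<in>T. card e)"
  proof (rule sum.cong[OF refl])
    fix e assume "e\<in>T"
    then have "e \<subseteq> X" using assms(3) by auto
    then have "{v\<in>X. v\<in>e} = e" by auto
    then show "(\<Sum>v\<in>X. if v\<in>e then 1 else 0) = card e"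
      using assms(1) sum.inter_filter[of X "\<lambda>_. 1::nat" "\<lambda>v. v\<in>e"] by simp
  qed
  also have "\<dots> = (\<Sum>e\<in>T. 2)" using assms(3) by (intro sum.cong) auto
  also have "\<dots> = 2 * card T" by simp
  finally show ?thesis .
qed

lemma extend:
  assumes sg: "simple_graph V E" and g: "good V E d X T c" and u: "u\<in>X" and w: "w\<notin>X"
    and e: "{u,w}\<in>E" and dg: "deg T u < d"
  shows "\<exists>c'. good V E d (insert w X) (insert {u,w} T) c'"
proof -
  from g have tr: "is_tree_in V E X T" and pr: "proper_edges c T" and cr: "c ` T \<subseteq> {..<d}"
    and db: "\<forall>v. deg T v \<le> d" by (auto simp: good_def)
  from tr have XV: "X\<subseteq>V" and TE: "T\<subseteq>E" and Tsub: "\<forall>e\<in>T. e\<subseteq>X" and fX: "finite X"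
    and con: "connected_graph X T" and cd: "card T + 1 = card X" by (auto simp: is_tree_in_def)
  have fT: "finite T" using TE sg_finite_E[OF sg] finite_subset by blast
  have wV: "w\<in>V" using sg_pair[OF sg e] by simp
  have nw: "\<forall>e\<in>T. w\<notin>e" using Tsub w by blast
  have notin: "{u,w}\<notin>T" using nw by auto
  let ?A = "{e\<in>T. u\<in>e}"
  have fA: "finite ?A" using fT by simp
  have "card (c ` ?A) \<le> card ?A" by (rule card_image_le[OF fA])
  hence lt: "card (c ` ?A) < card {..<d}" using dg by (simp add: deg_def)
  have "\<not> {..<d} \<subseteq> c ` ?A"
  proof
    assume "{..<d} \<subseteq> c ` ?A"
    hence "card {..<d} \<le> card (c ` ?A)" using fA by (intro card_mono) auto
    thus False using lt by simp
  qed
  then obtain col where col: "col < d" "col \<notin> c ` ?A" by auto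
  define c' where "c' = c({u,w} := col)"
  let ?F = "insert {u,w} T"
  have conn: "connected_graph (insert w X) ?F"
    unfolding connected_graph_def
  proof (intro conjI ballI)
    show "insert w X \<noteq> {}" by simp
    fix a b assume a: "a \<in> insert w X" and b: "b\<in>insert w X"
    have r1: "reach ?F x y" if "x\<in>X" "y\<in>X" for x y
    proof -
      have "reach T x y" using con that unfolding connected_graph_def by blast
      then show ?thesis by (rule reach_mono[rotated]) blast
    qed
    have uw: "reach ?F u w" by (rule reach_edge) simp
    have r2: "reach ?F x w" if "x\<in>insert w X" for x
    proof (cases "x = w")
      case True then show ?thesis by (simp add: reach_refl)
    next
      case False
      then have "x \<in> X" using that by simp
      then show ?thesis using reach_trans[OF r1[OF _ u] uw] by simp
    qed
    have r3: "reach ?F w x" if "x\<in>insert w X" for x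
      using reach_sym[OF r2[OF that]] .
    show "reach ?F a b" using reach_trans[OF r2[OF a] r3[OF b]] .
  qed
  have "card ?F + 1 = card (insert w X)" using notin w fT fX cd by simp
  then have tree': "is_tree_in V E (insert w X) ?F"
    using XV wV TE e Tsub conn fX u unfolding is_tree_in_def by auto
  have prop': "proper_edges c' ?F"
    unfolding proper_edges_def
  proof (intro ballI impI)
    fix e f assume e: "e \<in> ?F" and f: "f\<in> ?F" and ne: "e \<noteq> f \<and> e \<inter> f \<noteq> {}"
    show "c' e \<noteq> c' f"
    proof (cases "e = {u,w}")
      case True
      then have fT': "f\<in>T" "f \<noteq> {u,w}" using f ne by auto
      have "u \<in> f" using ne True nw fT' by auto
      hence "c f \<in> c ` ?A" using fT' by auto
      then show ?thesis using True fT' col by (auto simp: c'_def)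
    next
      case False
      then have eT: "e \<in> T" using e by auto
      show ?thesis
      proof (cases "f = {u,w}")
        case True
        have "u \<in> e" using ne True nw eT by auto
        hence "c e \<in> c ` ?A" using eT by auto
        then show ?thesis using True False col by (auto simp: c'_def)
      next
        case False': False
        then have "f \<in> T" using f by auto
        then show ?thesis using pr eT ne False False' unfolding proper_edges_def c'_def by auto
      qed
    qed
  qed
  have col': "c' ` ?F \<subseteq> {..<d}" using cr col by (auto simp: c'_def)
  have deg': "\<forall>v. deg ?F v \<le> d"
  proof
    fix v
    have "{e \<in> ?F. v\<in>e} \<subseteq> insert {u,w} {e\<in>T. v\<in>e}" by auto
    hence "card {e \<in> ?F. v\<in>e} \<le> card (insert {u,w} {e\<in>T. v\<in>e})" using fT by (intro card_mono) auto
    also have "\<dots> \<le> card {e\<in>T. v\<in>e} + 1" using fT by (simp add: card_insert_if)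
    finally have le: "deg ?F v \<le> deg T v + 1" by (simp add: deg_def)
    show "deg ?F v \<le> d"
    proof (cases "v = u")
      case True then show ?thesis using le dg by simp
    next
      case False
      show ?thesis
      proof (cases "v = w")
        case True
        then have "{e \<in> ?F. v\<in>e} = {{u,w}}" using nw by auto
        then show ?thesis using dg by (simp add: deg_def)
      next
        case False': False
        then have "{e \<in> ?F. v\<in>e} = {e\<in>T. v\<in>e}" using False by auto
        then show ?thesis using db by (simp add: deg_def)
      qed
    qed
  qed
  show ?thesis using tree' prop' col' deg' unfolding good_def by blast
qed

definition Qp :: "'a set set \<Rightarrow> 'a set set \<Rightarrow> bool" where
  "Qp E T \<longleftrightarrow> (\<exists>w0 x1 x2. x1\<noteq>x2 \<and> nbr E w0 = {x1,x2} \<and> {x1,w0}\<in>T \<and> {w0,x2}\<in>T)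
     \<or> (\<forall>w x1 x2. x1\<noteq>x2 \<longrightarrow> nbr E w \<noteq> {x1,x2})"

lemma sum_delta_const: "finite X \<Longrightarrow> b \<in> X \<Longrightarrow> (\<Sum>v\<in>X. if v = b then k else 0) = (k::nat)"
  by (simp add: sum.delta)

lemma failure:
  assumes sg: "simple_graph V E" and tc: "two_connected V E" and n4: "card V \<ge> 4"
    and dd: "d = card V div 2"
    and g: "good V E d X T c" and XV': "X \<noteq> V"
    and stuck: "\<forall>u\<in>X. \<forall>w. w\<notin>X \<longrightarrow> {u,w}\<in>E \<longrightarrow> d \<le> deg T u"
    and Q: "Qp E T"
  shows False
proof -
  have fV: "finite V" using sg simple_graph_def by auto
  from g have tr: "is_tree_in V E X T" by (auto simp: good_def)
  from tr have XV: "X\<subseteq>V" and TE: "T\<subseteq>E" and Tsub: "\<forall>e\<in>T. e\<subseteq>X" and fX: "finite X"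
    and con: "connected_graph X T" and cd: "card T + 1 = card X" by (auto simp: is_tree_in_def)
  have fT: "finite T" using TE sg_finite_E[OF sg] finite_subset by blast
  have d2: "d \<ge> 2" and dn1: "card V \<le> 2*d+1" and dn2: "2*d \<le> card V" using n4 dd by auto
  obtain y where y: "y\<in>V" "y\<notin>X" using XV XV' by blast
  have cX: "card X < card V" using XV XV' fV by (simp add: psubset_card_mono psubsetI)
  obtain x where x: "x\<in>X" using con by (auto simp: connected_graph_def)
  have conE: "connected_graph V E" using tc by (simp add: two_connected_def)
  have "reach E x y" using conE x y XV by (auto simp: connected_graph_def)
  then obtain b1 z1 where b1: "{b1,z1}\<in>E" "b1\<in>X" "z1\<notin>X" using crossing[OF _ x y(2)] by blast
  have db1: "d \<le> deg T b1" using stuck b1 by blast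
  have "deg T b1 \<le> card T" unfolding deg_def using fT by (intro card_mono) auto
  hence cX2: "card X \<ge> 2" using cd db1 d2 by simp
  have other: "\<forall>v\<in>X. \<exists>v'\<in>X. v' \<noteq> v"
  proof
    fix v assume "v \<in> X"
    show "\<exists>v'\<in>X. v' \<noteq> v"
    proof (rule ccontr)
      assume "\<not> ?thesis"
      hence "X \<subseteq> {v}" by auto
      hence "card X \<le> card {v}" by (intro card_mono) auto
      thus False using cX2 by simp
    qed
  qed
  obtain x' where x': "x' \<in> X" "x' \<noteq> b1" using other b1 by blast
  have "connected_graph (V-{b1}) (del_vertex_edges E b1)" using tc b1 XV
    by (auto simp: two_connected_def)
  moreover have "x' \<in> V-{b1}" "y\<in>V-{b1}" using x' y b1 XV by auto
  ultimately have "reach (del_vertex_edges E b1) x' y" by (auto simp: connected_graph_def)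
  then obtain b2 z2 where "{b2,z2} \<in> del_vertex_edges E b1" "b2\<in>X" "z2\<notin>X"
    using crossing[OF _ x'(1) y(2)] by blast
  hence b2: "{b2,z2}\<in>E" "b2 \<noteq> b1" "b2 \<in> X" "z2 \<notin> X" by (auto simp: del_vertex_edges_def)
  have db2: "d \<le> deg T b2" using stuck b2 by blast
  have pos: "\<forall>v\<in>X. 1 \<le> deg T v"
  proof
    fix v assume v: "v\<in>X"
    then obtain u where u: "u\<in>X" "u\<noteq>v" using other by blast
    have "reach T v u" using con v u by (auto simp: connected_graph_def)
    then obtain a b where "{a,b}\<in>T" "a\<in>{v}" "b\<notin>{v}" using crossing[of T v u "{v}"] u by blast
    hence "{a,b} \<in> {e\<in>T. v\<in>e}" by auto
    hence "{e\<in>T. v\<in>e} \<noteq> {}" by blast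
    thus "1 \<le> deg T v" unfolding deg_def using fT by (simp add: Suc_le_eq card_gt_0_iff)
  qed
  have hs: "(\<Sum>v\<in>X. deg T v) = 2*card T"
    using handshake[OF fX fT] Tsub TE sg_card2[OF sg] by blast
  define f where "f v = 1 + (if v=b1 then d-1 else 0) + (if v=b2 then d-1 else 0)" for v
  have fle: "\<forall>v\<in>X. f v \<le> deg T v" using pos db1 db2 b2(2) d2 unfolding f_def by auto
  have "(\<Sum>v\<in>X. f v) = (\<Sum>v\<in>X. 1) + (\<Sum>v\<in>X. if v=b1 then d-1 else 0) + (\<Sum>v\<in>X. if v=b2 then d-1 else 0)"
    unfolding f_def by (simp only: sum.distrib)
  also have "\<dots> = card X + (d-1) + (d-1)"
    using sum_delta_const[OF fX b1(2)] sum_delta_const[OF fX b2(3)] by simp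
  finally have sf: "(\<Sum>v\<in>X. f v) = card X + (d-1) + (d-1)" .
  moreover have "(\<Sum>v\<in>X. f v) \<le> (\<Sum>v\<in>X. deg T v)" using fle by (auto intro: sum_mono)
  ultimately have cXbig: "card X \<ge> 2*d" using hs cd d2 by simp
  have key: "\<forall>v\<in>X-{b1,b2}. deg T v \<le> 1"
  proof (rule ballI, rule ccontr)
    fix v0 assume v0: "v0 \<in> X-{b1,b2}" and nl: "\<not> deg T v0 \<le> 1"
    define f' where "f' v = f v + (if v=v0 then 1 else 0)" for v
    have "\<forall>v\<in>X. f' v \<le> deg T v" using fle nl v0 unfolding f'_def f_def by auto
    hence "(\<Sum>v\<in>X. f' v) \<le> (\<Sum>v\<in>X. deg T v)" by (auto intro: sum_mono)
    moreover have "(\<Sum>v\<in>X. f' v) = (\<Sum>v\<in>X. f v) + (\<Sum>v\<in>X. if v=v0 then 1 else 0)"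
      unfolding f'_def by (simp only: sum.distrib)
    moreover have "(\<Sum>v\<in>X. if v=v0 then 1 else 0) = (1::nat)" using sum_delta_const[OF fX, of v0 1] v0 by simp
    ultimately have "card X + (d-1) + (d-1) + 1 \<le> (\<Sum>v\<in>X. deg T v)"
      using sf by auto
    hence "card X \<ge> 2*d + 1" using hs cd d2 by simp
    thus False using cX dn1 by simp
  qed
  have Bsub: "\<forall>v\<in>X. \<forall>w. w\<notin>X \<longrightarrow> {v,w}\<in>E \<longrightarrow> v = b1 \<or> v = b2"
  proof (intro ballI allI impI)
    fix v w assume "v\<in>X" "w\<notin>X" "{v,w}\<in>E"
    hence "d \<le> deg T v" using stuck by blast
    thus "v = b1 \<or> v = b2" using key \<open>v\<in>X\<close> d2 by force
  qed
  from Q show False unfolding Qp_def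
  proof
    assume "\<exists>w0 x1 x2. x1\<noteq>x2 \<and> nbr E w0 = {x1,x2} \<and> {x1,w0}\<in>T \<and> {w0,x2}\<in>T"
    then obtain w0 x1 x2 where h: "x1\<noteq>x2" "nbr E w0 = {x1,x2}" "{x1,w0}\<in>T" "{w0,x2}\<in>T" by blast
    have inX: "w0 \<in> X" "x1 \<in> X" "x2 \<in> X" using h Tsub by auto
    have "{x1,w0} \<noteq> {w0,x2}" using h(1) by (auto simp: doubleton_eq_iff)
    hence "card {{x1,w0},{w0,x2}} = 2" by simp
    moreover have "{{x1,w0},{w0,x2}} \<subseteq> {e\<in>T. w0\<in>e}" using h by auto
    ultimately have "2 \<le> deg T w0" unfolding deg_def using fT
      by (metis (no_types, lifting) card_mono finite_subset mem_Collect_eq subsetI)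
    hence "w0 = b1 \<or> w0 = b2" using key inX by force
    then obtain z where z: "{w0,z}\<in>E" "z\<notin>X" using b1 b2 by blast
    hence "z \<in> nbr E w0" by (simp add: nbr_def)
    thus False using h(2) inX z by auto
  next
    assume nb: "\<forall>w x1 x2. x1\<noteq>x2 \<longrightarrow> nbr E w \<noteq> {x1,x2}"
    have "card (V - X) = card V - card X" using XV fX by (simp add: card_Diff_subset)
    hence "card (V - X) = 1" using cX cXbig dn1 by simp
    then obtain y' where yy: "V - X = {y'}" by (auto simp: card_Suc_eq)
    have out: "\<forall>z. z\<in>V \<longrightarrow> z\<notin>X \<longrightarrow> z = y"
    proof (intro allI impI)
      fix z assume "z\<in>V" "z\<notin>X"
      hence "z \<in> V - X" "y \<in> V - X" using y by auto
      thus "z = y" using yy by auto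
    qed
    have "nbr E y = {b1,b2}"
    proof
      show "{b1,b2} \<subseteq> nbr E y"
      proof -
        have "z1 = y" using out b1 sg_pair[OF sg b1(1)] by blast
        moreover have "z2 = y" using out b2 sg_pair[OF sg b2(1)] by blast
        ultimately show ?thesis using b1 b2 by (auto simp: nbr_def insert_commute)
      qed
      show "nbr E y \<subseteq> {b1,b2}"
      proof
        fix v assume "v \<in> nbr E y"
        hence ev: "{y,v}\<in>E" by (simp add: nbr_def)
        hence "v \<in> V" "v \<noteq> y" using sg_pair[OF sg] by auto
        hence "v \<in> X" using out by blast
        moreover have "{v,y} \<in> E" using ev by (simp add: insert_commute)
        ultimately show "v \<in> {b1,b2}" using Bsub y by blast
      qed
    qed
    thus False using nb b2(2) by metis
  qed
qed

lemma loop: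
  assumes sg: "simple_graph V E" and tc: "two_connected V E" and n4: "card V \<ge> 4"
    and dd: "d = card V div 2"
  shows "\<forall>X T c. good V E d X T c \<longrightarrow> Qp E T \<longrightarrow> card X + m = card V \<longrightarrow> (\<exists>T' c'. good V E d V T' c')"
proof (induction m)
  case 0
  show ?case
  proof (intro allI impI)
    fix X T c assume g: "good V E d X T c" and "Qp E T" and cX: "card X + 0 = card V"
    have fV: "finite V" using sg simple_graph_def by auto
    have "X \<subseteq> V" using g by (auto simp: good_def is_tree_in_def)
    hence "X = V" using cX fV by (simp add: card_subset_eq)
    thus "\<exists>T' c'. good V E d V T' c'" using g by blast
  qed
next
  case (Suc m)
  show ?case
  proof (intro allI impI)
    fix X T c assume g: "good V E d X T c" and Q: "Qp E T" and cX: "card X + Suc m = card V"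
    have XV': "X \<noteq> V" using cX by auto
    show "\<exists>T' c'. good V E d V T' c'"
    proof (cases "\<forall>u\<in>X. \<forall>w. w\<notin>X \<longrightarrow> {u,w}\<in>E \<longrightarrow> d \<le> deg T u")
      case True
      then have False using failure[OF sg tc n4 dd g XV'] Q by blast
      thus ?thesis ..
    next
      case False
      then obtain u w where uw: "u\<in>X" "w\<notin>X" "{u,w}\<in>E" "deg T u < d" by (auto simp: not_le)
      then obtain c' where g': "good V E d (insert w X) (insert {u,w} T) c'"
        using extend[OF sg g] by blast
      have fX: "finite X" using g by (auto simp: good_def is_tree_in_def)
      have "card (insert w X) + m = card V" using cX uw fX by simp
      moreover have "Qp E (insert {u,w} T)" using Q unfolding Qp_def by blast
      ultimately show ?thesis using Suc.IH g' by blast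
    qed
  qed
qed

theorem theorem4p2:
  fixes V :: "'a set" and E :: "'a set set"
  assumes "simple_graph V E"
    and "two_connected V E"
    and "\<not> hamiltonian V E"
    and "card V \<ge> 4"
  shows "px3 V E \<le> card V div 2"
proof -
  note sg = assms(1) and tc = assms(2) and n4 = assms(4)
  define d where "d = card V div 2"
  have d2: "d \<ge> 2" using n4 d_def by auto
  have fV: "finite V" using sg simple_graph_def by auto
  have single: "good V E d {v} {} (\<lambda>_. 0)" if "v \<in> V" for v
    using that d2 unfolding good_def is_tree_in_def connected_graph_def proper_edges_def deg_def
    by (auto simp: reach_refl)
  have start: "\<exists>X T c. good V E d X T c \<and> Qp E T \<and> card X \<le> card V"
  proof (cases "\<exists>w0 x1 x2. x1\<noteq>x2 \<and> nbr E w0 = {x1,x2}")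
    case True
    then obtain w0 x1 x2 where h: "x1\<noteq>x2" "nbr E w0 = {x1,x2}" by blast
    have e1: "{w0,x1}\<in>E" "{w0,x2}\<in>E" using h by (auto simp: nbr_def)
    have p1: "w0 \<noteq> x1" "w0\<in>V" "x1\<in>V" using sg_pair[OF sg e1(1)] by auto
    have p2: "w0 \<noteq> x2" "x2\<in>V" using sg_pair[OF sg e1(2)] by auto
    have e1': "{x1,w0}\<in>E" using e1 by (simp add: insert_commute)
    obtain c1 where g1: "good V E d (insert w0 {x1}) (insert {x1,w0} {}) c1"
      using extend[OF sg single[OF p1(3)] _ _ e1'] p1 d2 by (auto simp: deg_def)
    have "{e\<in>insert {x1,w0} {}. w0\<in>e} = {{x1,w0}}" by auto
    hence "deg (insert {x1,w0} {}) w0 = 1" by (simp add: deg_def)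
    then obtain c2 where g2: "good V E d (insert x2 (insert w0 {x1})) (insert {w0,x2} (insert {x1,w0} {})) c2"
      using extend[OF sg g1 _ _ e1(2)] p2 h(1) d2 by auto
    have "Qp E (insert {w0,x2} (insert {x1,w0} {}))" unfolding Qp_def using h by blast
    moreover have "card (insert x2 (insert w0 {x1})) \<le> card V"
      using p1 p2 fV by (intro card_mono) auto
    ultimately show ?thesis using g2 by blast
  next
    case False
    obtain v where "v \<in> V" using tc by (auto simp: two_connected_def connected_graph_def)
    moreover have "Qp E {}" unfolding Qp_def using False by blast
    ultimately show ?thesis using single fV by (metis card_mono empty_subsetI insert_subset)
  qed
  then obtain X T c where g: "good V E d X T c" "Qp E T" "card X \<le> card V" by blast
  obtain T' c' where g': "good V E d V T' c'"
  proof -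
    have "card X + (card V - card X) = card V" using g(3) by simp
    then show ?thesis using loop[OF sg tc n4 d_def, of "card V - card X"] g that by blast
  qed
  define c'' where "c'' e = (if e \<in> T' then c' e else 0)" for e
  have "c'' ` E \<subseteq> {..<d}" using g' d2 by (auto simp: c''_def good_def)
  moreover have "three_proper_coloring V E c''"
    unfolding three_proper_coloring_def
  proof (intro allI impI)
    fix S assume "S \<subseteq> V \<and> card S = 3"
    moreover have "proper_edges c'' T'" using g'
      unfolding good_def proper_edges_def c''_def by auto
    ultimately show "\<exists>VT ET. is_tree_in V E VT ET \<and> S \<subseteq> VT \<and> proper_edges c'' ET"
      using g' by (auto simp: good_def)
  qed
  ultimately have "\<exists>c :: 'a set \<Rightarrow> nat. c ` E \<subseteq> {..<d} \<and> three_proper_coloring V E c" by blast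
  thus ?thesis unfolding px3_def d_def[symmetric] by (rule Least_le)
qed

end
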